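(* No vector $(x_\alpha,\dots,x_1)$ with $\alpha\ge2$ and $x_{\alpha-1}=1$ is realizable.
   Context: All graphs are finite, nonempty, and reflexive (every vertex has a loop). $N[v]$ is the closed neighborhood of $v$ (including $v$). For distinct $v,w$, $w$ strictly corners $v$ if $N[v]\subsetneq N[w]$; $v$ is then a strict corner. Corner ranking: set $G^{(1)}=G$, $k=1$. If $G^{(k)}$ is a clique, give all its vertices rank $k$ and stop. Else if $G^{(k)}$ has no strict corners, give all its vertices rank $\infty$ and stop. Else give every strict corner of $G^{(k)}$ rank $k$, delete them to get $G^{(k+1)}$ (induced subgraph), increase $k$ and repeat. The corner rank is the largest rank of a vertex; $X_k$ is the set of rank-$k$ vertices; cop-win graphs are exactly those of finite corner rank. A vector is a finite list of positive integers; the rank cardinality vector of a graph of corner rank $\alpha$ is $(x_\alpha,\dots,x_1)$ with $x_k=|X_k|$; a vector is realizable if it is the rank cardinality vector of some cop-win graph. *)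

theory Defs
  imports Main
begin

text \<open>A finite, nonempty, reflexive (undirected) graph: vertex set V, adjacency E
  (only its restriction to V matters).\<close>
definition refl_graph :: "'a set \<Rightarrow> ('a \<Rightarrow> 'a \<Rightarrow> bool) \<Rightarrow> bool" where
  "refl_graph V E \<longleftrightarrow> finite V \<and> V \<noteq> {} \<and> (\<forall>u\<in>V. E u u)
     \<and> (\<forall>u\<in>V. \<forall>v\<in>V. E u v \<longleftrightarrow> E v u)"

definition cnbh :: "('a \<Rightarrow> 'a \<Rightarrow> bool) \<Rightarrow> 'a set \<Rightarrow> 'a \<Rightarrow> 'a set" where
  "cnbh E S v = {u \<in> S. E v u}"

definition strict_corners :: "('a \<Rightarrow> 'a \<Rightarrow> bool) \<Rightarrow> 'a set \<Rightarrow> 'a set" where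
  "strict_corners E S = {v \<in> S. \<exists>w\<in>S. w \<noteq> v \<and> cnbh E S v \<subset> cnbh E S w}"

definition is_clique :: "('a \<Rightarrow> 'a \<Rightarrow> bool) \<Rightarrow> 'a set \<Rightarrow> bool" where
  "is_clique E S \<longleftrightarrow> (\<forall>u\<in>S. \<forall>v\<in>S. E u v)"

text \<open>stage E V k is the vertex set of G^(k+1) in the corner ranking.\<close>
fun stage :: "('a \<Rightarrow> 'a \<Rightarrow> bool) \<Rightarrow> 'a set \<Rightarrow> nat \<Rightarrow> 'a set" where
  "stage E V 0 = V"
| "stage E V (Suc k) = stage E V k - strict_corners E (stage E V k)"

text \<open>Cop-win = finite corner rank = the ranking reaches a clique.\<close>
definition cop_win :: "'a set \<Rightarrow> ('a \<Rightarrow> 'a \<Rightarrow> bool) \<Rightarrow> bool" where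
  "cop_win V E \<longleftrightarrow> refl_graph V E \<and> (\<exists>k. is_clique E (stage E V k))"

text \<open>Corner rank alpha (for cop-win graphs): least k \<ge> 1 with G^(k) a clique.\<close>
definition corner_rank :: "'a set \<Rightarrow> ('a \<Rightarrow> 'a \<Rightarrow> bool) \<Rightarrow> nat" where
  "corner_rank V E = Suc (LEAST k. is_clique E (stage E V k))"

text \<open>X_k, the set of rank-k vertices, for 1 \<le> k \<le> alpha.\<close>
definition rank_set :: "'a set \<Rightarrow> ('a \<Rightarrow> 'a \<Rightarrow> bool) \<Rightarrow> nat \<Rightarrow> 'a set" where
  "rank_set V E k =
     (if k = corner_rank V E then stage E V (k - 1)
      else strict_corners E (stage E V (k - 1)))"

text \<open>Rank cardinality vector (x_alpha, ..., x_1) as a list.\<close>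
definition rank_card_vector :: "'a set \<Rightarrow> ('a \<Rightarrow> 'a \<Rightarrow> bool) \<Rightarrow> nat list" where
  "rank_card_vector V E =
     map (\<lambda>i. card (rank_set V E (corner_rank V E - i))) [0..<corner_rank V E]"

text \<open>Realizable: the rank cardinality vector of some cop-win graph
  (vertices drawn from nat; every finite graph is isomorphic to one such).\<close>
definition realizable :: "nat list \<Rightarrow> bool" where
  "realizable xs \<longleftrightarrow> (\<exists>(V::nat set) E. cop_win V E \<and> rank_card_vector V E = xs)"

end

theory Submission
  imports Defs
begin

lemma stage_sub: "stage E V k \<subseteq> V"
  by (induction k) auto

lemma key:
  assumes refl: "\<forall>u\<in>S. E u u" and sym: "\<forall>u\<in>S. \<forall>v\<in>S. E u v \<longleftrightarrow> E v u"
    and nc: "\<not> is_clique E S" and c: "is_clique E (S - strict_corners E S)"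
  shows "card (strict_corners E S) \<noteq> 1"
proof
  assume "card (strict_corners E S) = 1"
  then obtain v where C: "strict_corners E S = {v}" by (auto simp: card_Suc_eq)
  hence vS: "v \<in> S" and "\<exists>w\<in>S. w \<noteq> v \<and> cnbh E S v \<subset> cnbh E S w"
    unfolding strict_corners_def by auto
  then obtain w where wS: "w \<in> S" and wv: "w \<noteq> v" and sub: "cnbh E S v \<subset> cnbh E S w" by blast
  have cl: "\<forall>a\<in>S-{v}. \<forall>b\<in>S-{v}. E a b" using c C unfolding is_clique_def by auto
  obtain u where uS: "u \<in> S" and nvu: "\<not> E v u"
  proof -
    from nc obtain a b where a: "a \<in> S" "b \<in> S" "\<not> E a b" unfolding is_clique_def by auto
    show ?thesis
    proof (cases "a = v")
      case True then show ?thesis using that a by auto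
    next
      case False
      then have "b = v" using cl a by auto
      then show ?thesis using that a sym False by auto
    qed
  qed
  have "v \<in> cnbh E S v" using vS refl unfolding cnbh_def by auto
  hence "E w v" using sub unfolding cnbh_def by auto
  hence uw: "u \<noteq> w" using nvu sym uS wS vS by auto
  have uv: "u \<noteq> v" using nvu refl vS by auto
  have Nw: "cnbh E S w = S"
    using cl wS wv \<open>E w v\<close> unfolding cnbh_def by auto
  have Nu: "cnbh E S u = S - {v}"
    using cl uS uv nvu sym vS unfolding cnbh_def by auto
  have "u \<in> strict_corners E S"
  proof -
    have "S - {v} \<subset> cnbh E S w" using Nw vS by auto
    thus ?thesis unfolding strict_corners_def using uS wS uw Nu by auto
  qed
  thus False using C uv by auto
qed

theorem corollary3p19:
  fixes xs :: "nat list"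
  assumes "length xs \<ge> 2"
    and "\<forall>x\<in>set xs. x > 0"
    and "xs ! 1 = 1"
  shows "\<not> realizable xs"
proof
  assume "realizable xs"
  then obtain V :: "nat set" and E where cw: "cop_win V E" and rv: "rank_card_vector V E = xs"
    unfolding realizable_def by auto
  define k0 where "k0 = (LEAST k. is_clique E (stage E V k))"
  have ex: "\<exists>k. is_clique E (stage E V k)" using cw unfolding cop_win_def by auto
  have al: "corner_rank V E = Suc k0" unfolding corner_rank_def k0_def by simp
  have len: "length xs = Suc k0" using rv al unfolding rank_card_vector_def by auto
  hence k0: "k0 \<ge> 1" using assms(1) by auto
  then obtain k where kk: "k0 = Suc k" by (cases k0) auto
  have "xs ! 1 = card (rank_set V E (Suc k0 - 1))"
  proof -
    have "1 < corner_rank V E" using al k0 by simp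
    thus ?thesis using rv[symmetric] al unfolding rank_card_vector_def by (simp del: upt_Suc)
  qed
  also have "rank_set V E (Suc k0 - 1) = strict_corners E (stage E V k)"
    unfolding rank_set_def al kk by simp
  finally have c1: "card (strict_corners E (stage E V k)) = 1" using assms(3) by simp
  have cl: "is_clique E (stage E V k0)" using LeastI_ex[OF ex] unfolding k0_def .
  have ncl: "\<not> is_clique E (stage E V k)"
    using not_less_Least[of k "\<lambda>k. is_clique E (stage E V k)"] kk k0_def by auto
  have rg: "refl_graph V E" using cw unfolding cop_win_def by auto
  have S: "stage E V k \<subseteq> V" by (rule stage_sub)
  show False
    using key[of "stage E V k" E] c1 ncl cl kk S rg unfolding refl_graph_def by auto
qed

end
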